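(* Let $n\geq 1$ and $k\geq 1$ be integers with $k\not\equiv 1 \pmod 3$. Then $\gcd(B_{k,n},B_{k,n+1})=1$.
   Context: For an integer $k\geq 1$, the generalized balancing numbers are defined by $B_{k,0}=0$, $B_{k,1}=1$ and $B_{k,n}=3kB_{k,n-1}+(1-k)B_{k,n-2}$ for $n\geq 2$. *)

theory Defs
  imports Main
begin

fun B :: "int \<Rightarrow> nat \<Rightarrow> int" where
  "B k 0 = 0"
| "B k (Suc 0) = 1"
| "B k (Suc (Suc n)) = 3 * k * B k (Suc n) + (1 - k) * B k n"

end

theory Submission
  imports Defs "HOL-Computational_Algebra.Primes"
begin

lemma alg: "(Y::int) - 3 ^ Suc n = (k - 1) * b \<Longrightarrow>
  3 * k * Y + (1 - k) * X - 3 ^ Suc (Suc n) = (k - 1) * (3 * Y - X + 3 * b)"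
  by (simp add: algebra_simps)

lemma Bmod: "(k - 1) dvd (B k (Suc n) - 3 ^ n) \<and> (k - 1) dvd (B k (Suc (Suc n)) - 3 ^ Suc n)"
proof (induction n)
  case 0
  have "B k 2 - 3 = (k - 1) * 3" by (simp add: numeral_2_eq_2 algebra_simps)
  then have "(k - 1) dvd (B k 2 - 3)" by (metis dvd_triv_left)
  moreover have "B k 2 - 3 = B k (Suc (Suc 0)) - 3 ^ Suc 0" by (simp add: numeral_2_eq_2)
  ultimately show ?case by simp
next
  case (Suc n)
  then obtain a b where a: "B k (Suc n) - 3 ^ n = (k - 1) * a"
    and b: "B k (Suc (Suc n)) - 3 ^ Suc n = (k - 1) * b" by (meson dvdE)
  have "B k (Suc (Suc (Suc n))) - 3 ^ Suc (Suc n)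
     = 3 * k * B k (Suc (Suc n)) + (1 - k) * B k (Suc n) - 3 ^ Suc (Suc n)" by simp
  also have "\<dots> = (k - 1) * (3 * B k (Suc (Suc n)) - B k (Suc n) + 3 * b)"
    using alg[OF b] by simp
  finally show ?case using Suc by simp
qed

lemma Bcop:
  assumes "k mod 3 \<noteq> 1"
  shows "coprime (B k (Suc n)) (k - 1)"
proof -
  obtain q where q: "B k (Suc n) = 3 ^ n + (k - 1) * q"
    using Bmod[of k n] by (metis dvdE diff_add_cancel add.commute)
  have "\<not> (3::int) dvd (k - 1)" using assms by presburger
  then have "coprime (3::int) (k - 1)"
    by (simp add: prime_imp_coprime)
  then have "coprime ((3::int) ^ n) (k - 1)" by simp
  have g: "gcd (k - 1) ((3::int) ^ n + q * (k - 1)) = gcd (k - 1) (3 ^ n)"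
    using gcd_add_mult[of "k - 1" q "3 ^ n"] by (simp add: add.commute)
  then show ?thesis unfolding q
    by (metis \<open>coprime ((3::int) ^ n) (k - 1)\<close> coprime_iff_gcd_eq_1 gcd.commute mult.commute)
qed

lemma gaux: "gcd (a::int) (c + m * a) = gcd a c"
  using gcd_add_mult[of a m c] by (simp add: add.commute)

lemma main_aux:
  assumes "k mod 3 \<noteq> 1"
  shows "gcd (B k (Suc n)) (B k (Suc (Suc n))) = 1"
proof (induction n)
  case 0
  then show ?case by simp
next
  case (Suc n)
  have c: "coprime (B k (Suc (Suc n))) (1 - k)"
    using Bcop[OF assms, of "Suc n"] by (metis coprime_minus_right_iff minus_diff_eq)
  have "gcd (B k (Suc (Suc n))) (B k (Suc (Suc (Suc n))))
      = gcd (B k (Suc (Suc n))) ((1 - k) * B k (Suc n) + (3 * k) * B k (Suc (Suc n)))"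
    by (simp only: B.simps(3)) (simp add: algebra_simps)
  also have "\<dots> = gcd (B k (Suc (Suc n))) ((1 - k) * B k (Suc n))"
    by (rule gaux)
  also have "\<dots> = gcd (B k (Suc (Suc n))) (B k (Suc n))"
    using c by (rule gcd_mult_right_left_cancel)
  also have "\<dots> = 1" using Suc by (simp add: gcd.commute)
  finally show ?case .
qed

theorem mainTheorem11:
  fixes k :: int and n :: nat
  assumes "n \<ge> 1" and "k \<ge> 1" and "k mod 3 \<noteq> 1"
  shows "gcd (B k n) (B k (n + 1)) = 1"
proof -
  obtain m where "n = Suc m" using assms(1) by (cases n) auto
  then show ?thesis using main_aux[OF assms(3), of m] by simp
qed

end
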